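(* Let $\mu$ be a translation invariant probability measure on $X=\{0,1\}^{\mathbb{Z}}$ with finite total entropy $S(\mu)=\lim_{j\to\infty}S(\pi_j\mu)<\infty$. Then $\mu$ is a PC measure, i.e. $\mu$ is supported on the (countable) set of periodic configurations.
   Context: $\pi_j\mu$ is the marginal of $\mu$ on the coordinates $0,\ldots,j$, and $S(\nu)=-\sum_q\nu(q)\log\nu(q)$ is the Gibbs–Shannon entropy of a measure on a finite set; the limit defining the total entropy exists since $S(\pi_j\mu)$ is nondecreasing in $j$. *)

theory Defs
  imports "HOL-Probability.Probability"
begin

definition config_space :: "(int \<Rightarrow> bool) measure" where
  "config_space = PiM UNIV (\<lambda>_. count_space UNIV)"

definition shift :: "(int \<Rightarrow> bool) \<Rightarrow> (int \<Rightarrow> bool)" where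
  "shift x = (\<lambda>n. x (n + 1))"

definition cylinder :: "bool list \<Rightarrow> (int \<Rightarrow> bool) set" where
  "cylinder q = {x. \<forall>i < length q. x (int i) = q ! i}"

text \<open>Marginal of mu on coordinates 0..j: a measure on the finite set of
patterns of length j+1.\<close>
definition marginal :: "(int \<Rightarrow> bool) measure \<Rightarrow> nat \<Rightarrow> bool list \<Rightarrow> real" where
  "marginal M j q = measure M (cylinder q)"

definition block_entropy :: "(int \<Rightarrow> bool) measure \<Rightarrow> nat \<Rightarrow> real" where
  "block_entropy M j =
     - (\<Sum>q \<in> {q :: bool list. length q = Suc j}.
          (if marginal M j q = 0 then 0 else marginal M j q * ln (marginal M j q)))"

definition periodic_config :: "(int \<Rightarrow> bool) \<Rightarrow> bool" where
  "periodic_config x \<longleftrightarrow> (\<exists>p::int > 0. \<forall>n. x (n + p) = x n)"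

end

theory Submission
  imports Defs
begin


declare upt_Suc[simp del]

definition sh :: "nat \<Rightarrow> (int\<Rightarrow>bool) \<Rightarrow> (int\<Rightarrow>bool)" where
  "sh k x = (\<lambda>n. x (n + int k))"
definition pat :: "nat \<Rightarrow> (int\<Rightarrow>bool) \<Rightarrow> bool list" where
  "pat n x = map (\<lambda>i. x (int i - int n)) [0..<Suc (2*n)]"
definition E :: "nat \<Rightarrow> bool list \<Rightarrow> (int\<Rightarrow>bool) set" where
  "E n q = {x. pat n x = q}"

lemma space_cs: "space config_space = UNIV"
  by (simp add: config_space_def space_PiM)

lemma coord_meas: "(\<lambda>x. x i) \<in> measurable config_space (count_space UNIV)"
  unfolding config_space_def by (rule measurable_component_singleton) simp

lemma coord_sets: "{x. x i = b} \<in> sets config_space"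
proof -
  have "(\<lambda>x. x i) -` {b} \<inter> space config_space \<in> sets config_space"
    using coord_meas by (rule measurable_sets) simp
  then show ?thesis by (simp add: space_cs vimage_def)
qed

lemma E_sets: "E n q \<in> sets config_space"
proof (cases "length q = Suc (2*n)")
  case True
  have "E n q = (\<Inter>i\<in>{..<Suc (2*n)}. {x. x (int i - int n) = q!i})"
    using True by (auto simp: E_def pat_def list_eq_iff_nth_eq)
  moreover have "(\<Inter>i\<in>{..<Suc (2*n)}. {x. x (int i - int n) = q!i}) \<in> sets config_space"
    by (rule sets.finite_INT) (auto intro: coord_sets)
  ultimately show ?thesis by simp
next
  case False
  then have "E n q = {}" by (auto simp: E_def pat_def)
  then show ?thesis by simp
qed

lemma pat_vimage_sets: "pat n -` S \<in> sets config_space"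
proof -
  have "pat n -` S = (\<Union>q\<in>S. E n q)" by (auto simp: E_def)
  moreover have "(\<Union>q\<in>S. E n q) \<in> sets config_space"
    by (rule sets.countable_UN'') (auto intro: E_sets)
  ultimately show ?thesis by simp
qed

lemma singleton_sets: "{x} \<in> sets config_space"
proof -
  have "{x} = (\<Inter>i\<in>(UNIV::int set). {y. y i = x i})" by auto
  moreover have "(\<Inter>i\<in>(UNIV::int set). {y. y i = x i}) \<in> sets config_space"
    by (rule sets.countable_INT'') (use sets.top[of config_space] in \<open>auto intro: coord_sets simp: space_cs\<close>)
  ultimately show ?thesis by simp
qed

lemma finite_sets: "finite A \<Longrightarrow> A \<in> sets config_space"
  by (rule sets.countable) (auto intro: singleton_sets countable_finite)

lemma shift_meas: "shift \<in> measurable config_space config_space"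
proof -
  have "(\<lambda>x i. x (i+1)) \<in> measurable config_space (PiM UNIV (\<lambda>_. count_space UNIV))"
    by (rule measurable_PiM_single') (auto intro: coord_meas simp: space_cs)
  then show ?thesis by (simp add: shift_def[abs_def] config_space_def)
qed

lemma cyl_eq: "length q = Suc (2*n) \<Longrightarrow> sh n -` E n q = cylinder q"
  by (auto simp: sh_def E_def pat_def cylinder_def list_eq_iff_nth_eq simp del: upt_Suc)

lemma window: "pat n y = pat n x \<longleftrightarrow> (\<forall>i. - int n \<le> i \<and> i \<le> int n \<longrightarrow> y i = x i)"
proof
  assume h: "pat n y = pat n x"
  show "\<forall>i. - int n \<le> i \<and> i \<le> int n \<longrightarrow> y i = x i"
  proof (intro allI impI)
    fix i :: int assume i: "- int n \<le> i \<and> i \<le> int n"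
    define j where "j = nat (i + int n)"
    have j: "j < Suc (2*n)" "int j - int n = i" using i by (auto simp: j_def)
    have "pat n y ! j = pat n x ! j" using h by simp
    then show "y i = x i" using j by (simp add: pat_def del: upt_Suc)
  qed
next
  assume h: "\<forall>i. - int n \<le> i \<and> i \<le> int n \<longrightarrow> y i = x i"
  show "pat n y = pat n x" unfolding pat_def
    by (rule map_cong[OF refl]) (use h in auto)
qed

lemma sh_Suc: "sh (Suc k) y = shift (sh k y)"
  by (auto simp: sh_def shift_def algebra_simps)



lemma ent_nonneg: "0 \<le> (m::real) \<Longrightarrow> m \<le> 1 \<Longrightarrow> 0 \<le> - (if m = 0 then 0 else m * ln m)"
  by (auto simp: mult_nonneg_nonpos)

lemma ent_small: assumes "0 \<le> (m::real)" "m \<le> d" "0 < d"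
  shows "m * (- ln d) \<le> - (if m = 0 then 0 else m * ln m)"
proof (cases "m = 0")
  case False
  then have "m > 0" using assms by auto
  then have "ln m \<le> ln d" using assms by simp
  then show ?thesis using False \<open>m > 0\<close> by (simp add: mult_left_mono)
qed simp

locale sys = prob_space M for M :: "(int\<Rightarrow>bool) measure" +
  assumes sets_M: "sets M = sets config_space" and inv_M: "distr M M shift = M"
begin

lemma space_M: "space M = UNIV"
  using sets_eq_imp_space_eq[OF sets_M] space_cs by simp

lemma shift_M: "shift \<in> measurable M M"
  using shift_meas measurable_cong_sets[OF sets_M sets_M] by simp

lemma shift_inv: "S \<in> sets M \<Longrightarrow> measure M (shift -` S) = measure M S"
  using measure_distr[OF shift_M, of S] inv_M space_M by simp

lemma shift_vimage: "S \<in> sets M \<Longrightarrow> shift -` S \<in> sets M"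
  using measurable_sets[OF shift_M, of S] space_M by simp

lemma sh_inv: "S \<in> sets M \<Longrightarrow> measure M (sh k -` S) = measure M S"
proof (induction k arbitrary: S)
  case 0
  have "sh 0 -` S = S" by (auto simp: sh_def)
  then show ?case by simp
next
  case (Suc k)
  have "sh (Suc k) -` S = sh k -` (shift -` S)" by (auto simp: sh_Suc)
  moreover have "measure M (sh k -` (shift -` S)) = measure M (shift -` S)"
    by (rule Suc.IH[OF shift_vimage[OF Suc.prems]])
  ultimately show ?case using shift_inv[OF Suc.prems] by simp
qed

lemma E_measure: "length q = Suc (2*n) \<Longrightarrow> measure M (E n q) = marginal M (2*n) q"
  using sh_inv[of "E n q" n] cyl_eq[of q n] E_sets[of n q] sets_M by (simp add: marginal_def)

lemma sh_inj: "sh k y = sh k x \<Longrightarrow> y = x"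
proof
  fix n assume "sh k y = sh k x"
  then have "sh k y (n - int k) = sh k x (n - int k)" by simp
  then show "y n = x n" by (simp add: sh_def)
qed

lemma atom_periodic: assumes pos: "measure M {x} > 0" shows "periodic_config x"
proof -
  define m where "m = measure M {x}"
  have mk: "measure M {sh k x} = m" for k
  proof -
    have "sh k -` {sh k x} = {x}" using sh_inj by auto
    then show ?thesis using sh_inv[of "{sh k x}" k] singleton_sets sets_M by (simp add: m_def)
  qed
  obtain N :: nat where N: "1 < real N * m" using ex_less_of_nat_mult pos m_def by blast
  have "\<not> inj_on (\<lambda>k. sh k x) {..<N}"
  proof
    assume inj: "inj_on (\<lambda>k. sh k x) {..<N}"
    let ?F = "(\<lambda>k. sh k x) ` {..<N}"
    have "measure M (\<Union>y\<in>?F. {y}) = (\<Sum>y\<in>?F. measure M {y})"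
      by (rule finite_measure_finite_Union) (auto simp: sets_M singleton_sets disjoint_family_on_def)
    also have "\<dots> = (\<Sum>k<N. measure M {sh k x})" using inj by (simp add: sum.reindex)
    also have "\<dots> = real N * m" using mk by simp
    finally have "measure M (\<Union>y\<in>?F. {y}) = real N * m" .
    moreover have "measure M (\<Union>y\<in>?F. {y}) \<le> 1" by (rule prob_le_1)
    ultimately show False using N by simp
  qed
  then obtain i j where ij0: "i \<noteq> j" "sh i x = sh j x"
    unfolding inj_on_def by blast
  obtain i j where ij: "i < j" "sh i x = sh j x"
  proof (cases "i < j")
    case True then show ?thesis using ij0 that by blast
  next
    case False then have "j < i" using ij0 by simp
    then show ?thesis using ij0 that[of j i] by simp
  qed
  show ?thesis unfolding periodic_config_def
  proof (intro exI[of _ "int j - int i"] conjI allI)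
    show "0 < int j - int i" using ij by simp
    fix n
    have "sh i x (n - int i) = sh j x (n - int i)" using ij by simp
    then show "x (n + (int j - int i)) = x n" by (simp add: sh_def algebra_simps)
  qed
qed


lemma periodic_sets: "{x. periodic_config x} \<in> sets M"
proof -
  have eq: "{x. x a = x b} = ({x. x a = True} \<inter> {x. x b = True}) \<union> ({x. x a = False} \<inter> {x. x b = False})"
    for a b :: int by auto
  have c: "{x. x a = x b} \<in> sets M" for a b :: int
    unfolding eq sets_M by (intro sets.Un sets.Int coord_sets)
  have "{x. periodic_config x} = (\<Union>p\<in>{p::int. p > 0}. \<Inter>n\<in>UNIV. {x. x (n+p) = x n})"
    by (auto simp: periodic_config_def)
  also have "\<dots> \<in> sets M"
    by (intro sets.countable_UN'' sets.countable_INT'') (use c sets.top[of M] space_M in auto)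
  finally show ?thesis .
qed

lemma ent_bound:
  assumes K: "\<And>j. \<bar>block_entropy M j\<bar> \<le> K" and eps: "\<epsilon> > 0"
  shows "measure M {x. periodic_config x} \<ge> 1 - \<epsilon>"
proof -
  have Kpos: "K \<ge> 0" using K[of 0] by simp
  define d where "d = exp (- ((K + 1) / \<epsilon>))"
  have Kp: "(K + 1) / \<epsilon> > 0" using eps Kpos by simp
  have d: "0 < d" "d < 1" "- ln d = (K + 1) / \<epsilon>" using Kp by (auto simp: d_def)
  define G where "G n = pat n -` {q. measure M (E n q) > d}" for n
  have Gs: "G n \<in> sets M" for n unfolding G_def sets_M by (rule pat_vimage_sets)
  have Gdec: "G (Suc n) \<subseteq> G n" for n
  proof
    fix x assume "x \<in> G (Suc n)"
    then have "measure M (E (Suc n) (pat (Suc n) x)) > d" by (simp add: G_def)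
    moreover have "E (Suc n) (pat (Suc n) x) \<subseteq> E n (pat n x)"
      by (auto simp: E_def window)
    then have "measure M (E (Suc n) (pat (Suc n) x)) \<le> measure M (E n (pat n x))"
      by (rule finite_measure_mono) (use E_sets[of n "pat n x"] sets_M in auto)
    ultimately show "x \<in> G n" by (simp add: G_def)
  qed
  have Gbig: "measure M (G n) \<ge> 1 - \<epsilon>" for n
  proof -
    define Q where "Q = {q :: bool list. length q = Suc (2*n)}"
    define L where "L = {q \<in> Q. marginal M (2*n) q \<le> d}"
    have fQ: "finite Q" unfolding Q_def
      by (rule finite_subset[OF _ finite_lists_length_eq[of "UNIV::bool set" "Suc (2*n)"]]) auto
    have fL: "finite L" using fQ by (simp add: L_def)
    have mq: "0 \<le> marginal M (2*n) q" "marginal M (2*n) q \<le> 1" for q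
      by (auto simp: marginal_def)
    define h where "h q = - (if marginal M (2*n) q = 0 then 0 else marginal M (2*n) q * ln (marginal M (2*n) q))" for q
    have "(\<Sum>q\<in>L. marginal M (2*n) q * ((K+1)/\<epsilon>)) \<le> (\<Sum>q\<in>L. h q)"
      unfolding h_def d(3)[symmetric]
      by (intro sum_mono ent_small) (use mq d in \<open>auto simp: L_def\<close>)
    also have "\<dots> \<le> (\<Sum>q\<in>Q. h q)"
    proof (rule sum_mono2[OF fQ])
      show "L \<subseteq> Q" by (auto simp: L_def)
      fix b show "0 \<le> h b" unfolding h_def by (rule ent_nonneg[OF mq])
    qed
    also have "\<dots> = block_entropy M (2*n)"
      by (simp add: block_entropy_def h_def Q_def sum_negf)
    also have "\<dots> \<le> K" using K[of "2*n"] by simp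
    finally have "(\<Sum>q\<in>L. marginal M (2*n) q) * ((K+1)/\<epsilon>) \<le> K"
      by (simp only: sum_distrib_right)
    then have "(\<Sum>q\<in>L. marginal M (2*n) q) * (K+1) \<le> K * \<epsilon>"
      using eps by (simp add: field_simps)
    then have sL: "(\<Sum>q\<in>L. marginal M (2*n) q) \<le> \<epsilon>"
    proof -
      have "K * \<epsilon> \<le> (K+1) * \<epsilon>" using eps by simp
      then have "(\<Sum>q\<in>L. marginal M (2*n) q) * (K+1) \<le> \<epsilon> * (K+1)"
        using \<open>(\<Sum>q\<in>L. marginal M (2*n) q) * (K+1) \<le> K * \<epsilon>\<close> by (simp add: mult.commute)
      then show ?thesis by (rule mult_right_le_imp_le) (use Kpos in simp)
    qed
    have "space M - G n = (\<Union>q\<in>L. E n q)"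
    proof (intro equalityI subsetI)
      fix x assume "x \<in> space M - G n"
      then have "\<not> d < measure M (E n (pat n x))" by (simp add: G_def)
      moreover have lp: "length (pat n x) = Suc (2*n)" by (simp add: pat_def)
      ultimately have "pat n x \<in> L" using E_measure[OF lp] by (simp add: L_def Q_def)
      then show "x \<in> (\<Union>q\<in>L. E n q)" by (auto simp: E_def)
    next
      fix x assume "x \<in> (\<Union>q\<in>L. E n q)"
      then obtain q where q: "q \<in> L" "pat n x = q" by (auto simp: E_def)
      then have "length q = Suc (2*n)" by (simp add: L_def Q_def)
      then show "x \<in> space M - G n" using E_measure[of q n] q by (auto simp: L_def G_def space_M)
    qed
    then have "measure M (space M - G n) \<le> (\<Sum>q\<in>L. measure M (E n q))"
    proof -
      have "E n ` L \<subseteq> sets M" using E_sets sets_M by auto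
      from finite_measure_subadditive_finite[OF fL this] \<open>space M - G n = (\<Union>q\<in>L. E n q)\<close>
      show ?thesis by simp
    qed
    also have "\<dots> = (\<Sum>q\<in>L. marginal M (2*n) q)"
      by (intro sum.cong refl E_measure) (simp add: L_def Q_def)
    finally show ?thesis using prob_compl[OF Gs[of n]] sL by simp
  qed
  define A where "A = (\<Inter>n. G n)"
  have As: "A \<in> sets M" unfolding A_def using Gs by auto
  have "(\<lambda>n. measure M (G n)) \<longlonglongrightarrow> measure M A"
    unfolding A_def by (rule finite_Lim_measure_decseq) (use Gs Gdec in \<open>auto intro: decseq_SucI\<close>)
  then have Abig: "measure M A \<ge> 1 - \<epsilon>"
    by (rule LIMSEQ_le_const) (use Gbig in auto)
  have Afin: "finite A"
  proof (rule ccontr)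
    assume "infinite A"
    obtain N :: nat where N: "1 < real N * d" using ex_less_of_nat_mult d by blast
    obtain F where F: "finite F" "card F = N" "F \<subseteq> A"
      using infinite_arbitrarily_large[OF \<open>infinite A\<close>] by blast
    define D where "D = {(x,y). x \<in> F \<and> y \<in> F \<and> x \<noteq> y}"
    have fD: "finite D"
      by (rule finite_subset[OF _ finite_cartesian_product[OF F(1) F(1)]]) (auto simp: D_def)
    have "\<forall>p\<in>D. eventually (\<lambda>n. pat n (fst p) \<noteq> pat n (snd p)) sequentially"
    proof
      fix p assume "p \<in> D"
      then have "fst p \<noteq> snd p" by (auto simp: D_def)
      then obtain i where i: "fst p i \<noteq> snd p i" by auto
      show "eventually (\<lambda>n. pat n (fst p) \<noteq> pat n (snd p)) sequentially"
        unfolding eventually_sequentially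
      proof (intro exI allI impI)
        fix n assume "nat \<bar>i\<bar> \<le> n"
        then have "- int n \<le> i \<and> i \<le> int n" by auto
        then show "pat n (fst p) \<noteq> pat n (snd p)" using i window[of n "fst p" "snd p"] by auto
      qed
    qed
    from eventually_ball_finite[OF fD this] obtain n where
      n: "\<forall>p\<in>D. pat n (fst p) \<noteq> pat n (snd p)"
      unfolding eventually_sequentially by blast
    have inj: "inj_on (pat n) F"
      unfolding inj_on_def using n by (auto simp: D_def)
    have "real N * d = (\<Sum>x\<in>F. d)" using F by simp
    also have "\<dots> \<le> (\<Sum>x\<in>F. measure M (E n (pat n x)))"
    proof (rule sum_mono)
      fix x assume "x \<in> F"
      then have "x \<in> G n" using F(3) by (auto simp: A_def)
      then show "d \<le> measure M (E n (pat n x))" by (simp add: G_def)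
    qed
    also have "\<dots> = (\<Sum>q\<in>pat n ` F. measure M (E n q))"
      using inj by (simp add: sum.reindex)
    also have "\<dots> = measure M (\<Union>q\<in>pat n ` F. E n q)"
      by (rule finite_measure_finite_Union[symmetric])
         (use F(1) E_sets sets_M in \<open>auto simp: disjoint_family_on_def E_def\<close>)
    also have "\<dots> \<le> 1" by (rule prob_le_1)
    finally show False using N by simp
  qed
  define P where "P = {x. periodic_config x}"
  have Ps: "P \<in> sets M" unfolding P_def by (rule periodic_sets)
  have fAP: "finite (A - P)" using Afin by simp
  have APs: "A - P \<in> sets M" using As Ps by auto
  have "measure M (A - P) = measure M (\<Union>x\<in>A-P. {x})" by simp
  also have "\<dots> \<le> (\<Sum>x\<in>A-P. measure M {x})"
    by (rule finite_measure_subadditive_finite[OF fAP]) (auto simp: sets_M singleton_sets)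
  also have "\<dots> \<le> 0"
  proof (rule sum_nonpos)
    fix x assume "x \<in> A - P"
    then have "\<not> measure M {x} > 0" using atom_periodic by (auto simp: P_def)
    then show "measure M {x} \<le> 0" by simp
  qed
  finally have AP0: "measure M (A - P) \<le> 0" .
  have "measure M A \<le> measure M (P \<union> (A - P))"
    by (rule finite_measure_mono) (use Ps APs As in auto)
  also have "\<dots> \<le> measure M P + measure M (A - P)"
    by (rule measure_Un_le) (use Ps APs in auto)
  finally show ?thesis using Abig AP0 by (simp add: P_def)
qed

end

theorem lemma5p1:
  fixes M :: "(int \<Rightarrow> bool) measure"
  assumes "prob_space M"
    and "sets M = sets config_space"
    and "distr M M shift = M"
    and "convergent (block_entropy M)"
  shows "{x \<in> space M. periodic_config x} \<in> sets M
         \<and> measure M {x \<in> space M. periodic_config x} = 1"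
proof -
  interpret sys M using assms by (simp add: sys_def sys_axioms_def)
  obtain K where K: "\<And>j. \<bar>block_entropy M j\<bar> \<le> K"
    using convergent_imp_Bseq[OF assms(4)] unfolding Bseq_def by auto
  have eq: "{x \<in> space M. periodic_config x} = {x. periodic_config x}" by (simp add: space_M)
  have le1: "measure M {x. periodic_config x} \<le> 1" by (rule prob_le_1)
  have "measure M {x. periodic_config x} = 1"
  proof (rule ccontr)
    assume "measure M {x. periodic_config x} \<noteq> 1"
    then have lt: "measure M {x. periodic_config x} < 1" by (rule order_le_neq_trans[OF le1])
    have "measure M {x. periodic_config x} \<ge> 1 - (1 - measure M {x. periodic_config x}) / 2"
      by (rule ent_bound[OF K]) (use lt in simp)
    then show False using lt by (simp add: field_simps)
  qed
  then show ?thesis using periodic_sets eq by simp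
qed

end
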